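(* Let $p$ be a prime and let $G$ be a finite subgroup of $\mathrm{M}(p,\mathbb{C})$ whose permutation part $\phi(G)$ is transitive. If $\mathrm{D}(p,\mathbb{C})\cap G$ is not contained in the group of scalar matrices, then $G$ is irreducible. Conversely, if $G$ is solvable and irreducible, then $\mathrm{D}(p,\mathbb{C})\cap G$ is not contained in the group of scalar matrices.
   Context: $\mathrm{M}(p,\mathbb{C})$ is the group of monomial matrices in $\mathrm{GL}(p,\mathbb{C})$, equal to $\mathrm{D}(p,\mathbb{C})\rtimes \mathrm{P}(p)$ with $\mathrm{D}(p,\mathbb{C})$ the invertible diagonal matrices and $\mathrm{P}(p)\cong\mathrm{Sym}(p)$ the permutation matrices (via $\alpha\mapsto[\delta_{i\alpha,j}]_{i,j}$). The map $\phi\colon \mathrm{M}(p,\mathbb{C})\to\mathrm{Sym}(p)$ sends $dt\mapsto t$; $\phi(G)$ is the permutation part of $G$. *)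

theory Defs
  imports "HOL-Analysis.Analysis" "HOL-Algebra.Solvable_Groups"
begin

text \<open>Matrices in GL(p,C) are modelled as complex^'n^'n with CARD('n) = p.\<close>

definition diag_mat :: "('n::finite \<Rightarrow> complex) \<Rightarrow> complex^'n^'n" where
  "diag_mat d = (\<chi> i j. if i = j then d i else 0)"

definition perm_mat :: "('n::finite \<Rightarrow> 'n) \<Rightarrow> complex^'n^'n" where
  "perm_mat \<alpha> = (\<chi> i j. if \<alpha> i = j then 1 else 0)"

definition monomial_mat :: "complex^'n^'n \<Rightarrow> bool" where
  "monomial_mat A \<longleftrightarrow> (\<exists>d \<alpha>. (\<forall>i. d i \<noteq> 0) \<and> \<alpha> permutes (UNIV::'n::finite set)
      \<and> A = diag_mat d ** perm_mat \<alpha>)"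

definition perm_part :: "complex^'n^'n \<Rightarrow> ('n::finite \<Rightarrow> 'n)" where
  "perm_part A = (THE \<alpha>. \<alpha> permutes (UNIV::'n set) \<and>
      (\<exists>d. (\<forall>i. d i \<noteq> 0) \<and> A = diag_mat d ** perm_mat \<alpha>))"

definition diagonal_mat :: "complex^'n^'n \<Rightarrow> bool" where
  "diagonal_mat A \<longleftrightarrow> (\<exists>d. (\<forall>i. d i \<noteq> 0) \<and> A = diag_mat (d::'n::finite \<Rightarrow> complex))"

definition mat_group :: "(complex^'n^'n) set \<Rightarrow> (complex^'n^'n) monoid" where
  "mat_group G = \<lparr>carrier = G, monoid.mult = (\<lambda>A B. A ** B), one = mat 1\<rparr>"

definition csubspace_vec :: "(complex^'n::finite) set \<Rightarrow> bool" where
  "csubspace_vec W \<longleftrightarrow> 0 \<in> W \<and> (\<forall>x\<in>W. \<forall>y\<in>W. x + y \<in> W) \<and> (\<forall>c. \<forall>x\<in>W. c *s x \<in> W)"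

definition irreducible_mat_group :: "(complex^'n^'n) set \<Rightarrow> bool" where
  "irreducible_mat_group G \<longleftrightarrow>
     \<not> (\<exists>W. csubspace_vec W \<and> W \<noteq> {0} \<and> W \<noteq> (UNIV::(complex^'n::finite) set) \<and>
          (\<forall>g\<in>G. \<forall>w\<in>W. g *v w \<in> W))"

end

theory Submission
  imports Defs "HOL-Computational_Algebra.Primes" "HOL-Algebra.Multiplicative_Group"
begin


lemma if0_mult: "(if P then a else 0) * (b::complex) = (if P then a * b else 0)"
  "(b::complex) * (if P then a else 0) = (if P then b * a else 0)" by auto

lemma sum_single: "(\<Sum>k\<in>(UNIV::'n::finite set). if P k then if i = k then f k else 0 else 0) = (if P i then f i else (0::complex))"
proof -
  have "(\<Sum>k\<in>(UNIV::'n set). if P k then if i = k then f k else 0 else 0) = (\<Sum>k\<in>UNIV. if k = i then (if P i then f i else 0) else 0)"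
    by (rule sum.cong) auto
  then show ?thesis by simp
qed

lemma diag_perm_entry:
  "(diag_mat d ** perm_mat \<alpha>) $ i $ j = (if \<alpha> i = j then d i else (0::complex))"
  unfolding diag_mat_def perm_mat_def matrix_matrix_mult_def
  by (simp add: if0_mult sum_single cong: if_cong)

lemma mono_char:
  assumes "monomial_mat A"
  shows "perm_part A permutes (UNIV::'n::finite set)" "\<And>i. A$i$(perm_part A i) \<noteq> 0"
    "\<And>i j. A$i$j = (if perm_part A i = j then A$i$(perm_part A i) else 0)"
proof -
  obtain d \<alpha> where d: "\<forall>i. d i \<noteq> 0" and a: "\<alpha> permutes (UNIV::'n set)" and A: "A = diag_mat d ** perm_mat \<alpha>"
    using assms unfolding monomial_mat_def by blast
  have "perm_part A = \<alpha>"
    unfolding perm_part_def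
  proof (rule the_equality)
    show "\<alpha> permutes UNIV \<and> (\<exists>d. (\<forall>i. d i \<noteq> 0) \<and> A = diag_mat d ** perm_mat \<alpha>)" using d a A by blast
  next
    fix \<beta> assume "\<beta> permutes UNIV \<and> (\<exists>e. (\<forall>i. e i \<noteq> 0) \<and> A = diag_mat e ** perm_mat \<beta>)"
    then obtain e where e: "\<forall>i. e i \<noteq> 0" "A = diag_mat e ** perm_mat \<beta>" by blast
    show "\<beta> = \<alpha>"
    proof
      fix i
      have "A$i$(\<beta> i) = e i" using e by (simp add: diag_perm_entry)
      moreover have "A$i$(\<beta> i) = (if \<alpha> i = \<beta> i then d i else 0)" using A by (simp add: diag_perm_entry)
      ultimately show "\<beta> i = \<alpha> i" using e by (auto split: if_splits)
    qed
  qed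
  then show "perm_part A permutes (UNIV::'n::finite set)" "\<And>i. A$i$(perm_part A i) \<noteq> 0"
    "\<And>i j. A$i$j = (if perm_part A i = j then A$i$(perm_part A i) else 0)"
    using a d A by (auto simp: diag_perm_entry)
qed

lemma mono_intro:
  assumes "\<alpha> permutes (UNIV::'n::finite set)" "\<And>i. d i \<noteq> 0"
    "\<And>i j. A$i$j = (if \<alpha> i = j then d i else (0::complex))"
  shows "monomial_mat A" "perm_part A = \<alpha>"
proof -
  have A: "A = diag_mat d ** perm_mat \<alpha>"
    by (simp add: vec_eq_iff diag_perm_entry assms(3))
  show m: "monomial_mat A" unfolding monomial_mat_def using A assms by blast
  have "A$i$(\<alpha> i) \<noteq> 0" for i using assms by simp
  then have "perm_part A i = \<alpha> i" for i using mono_char(3)[OF m, of i "\<alpha> i"] by (metis (full_types))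
  then show "perm_part A = \<alpha>" by auto
qed

definition dd :: "complex^'n^'n \<Rightarrow> 'n::finite \<Rightarrow> complex" where
  "dd A i = A$i$(perm_part A i)"

lemma mono_entry: "monomial_mat A \<Longrightarrow> A$i$j = (if perm_part A i = j then dd A i else 0)"
  using mono_char(3) unfolding dd_def by metis

lemma mono_dd: "monomial_mat A \<Longrightarrow> dd A i \<noteq> 0"
  using mono_char(2) unfolding dd_def by metis

lemma mono_perm: "monomial_mat (A::complex^'n^'n) \<Longrightarrow> perm_part A permutes (UNIV::'n::finite set)"
  using mono_char(1) by metis

lemma mono_mult_entry:
  assumes "monomial_mat A" "monomial_mat B"
  shows "(A ** B)$i$j = (if perm_part B (perm_part A i) = j then dd A i * dd B (perm_part A i) else 0)"
  unfolding matrix_matrix_mult_def using assms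
  by (simp add: mono_entry[OF assms(1)] mono_entry[OF assms(2)] if0_mult sum_single cong: if_cong)

lemma mono_mult:
  assumes "monomial_mat A" "monomial_mat B"
  shows "monomial_mat (A ** B)" "perm_part (A ** B) = perm_part B \<circ> perm_part A"
    "dd (A ** B) i = dd A i * dd B (perm_part A i)"
proof -
  have p: "perm_part B \<circ> perm_part A permutes UNIV"
    using mono_perm[OF assms(1)] mono_perm[OF assms(2)] by (simp add: permutes_compose)
  have n: "dd A i * dd B (perm_part A i) \<noteq> 0" for i using mono_dd[OF assms(1)] mono_dd[OF assms(2)] by simp
  have e: "(A ** B)$i$j = (if (perm_part B \<circ> perm_part A) i = j then dd A i * dd B (perm_part A i) else 0)" for i j
    using mono_mult_entry[OF assms, of i j] by simp
  show m: "monomial_mat (A ** B)" "perm_part (A ** B) = perm_part B \<circ> perm_part A"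
    using mono_intro[OF p n e] by auto
  show "dd (A ** B) i = dd A i * dd B (perm_part A i)"
    unfolding dd_def[of "A ** B"] m(2) e by simp
qed

lemma mono_mult_vec:
  assumes "monomial_mat A"
  shows "(A *v v)$i = dd A i * v$(perm_part A i)"
  unfolding matrix_vector_mult_def using assms
  by (simp add: mono_entry[OF assms] if0_mult sum_single cong: if_cong)

lemma mat_mono: "c \<noteq> 0 \<Longrightarrow> monomial_mat (mat c :: complex^'n::finite^'n)" "c \<noteq> 0 \<Longrightarrow> perm_part (mat c :: complex^'n^'n) = id"
  "c \<noteq> 0 \<Longrightarrow> dd (mat c :: complex^'n^'n) i = c"
proof -
  assume c: "c \<noteq> 0"
  have e: "(mat c :: complex^'n^'n)$i$j = (if id i = j then c else 0)" for i j by (simp add: mat_def)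
  show "monomial_mat (mat c :: complex^'n::finite^'n)" "perm_part (mat c :: complex^'n^'n) = id"
    using mono_intro[OF permutes_id _ e] c by auto
  then show "dd (mat c :: complex^'n^'n) i = c" unfolding dd_def by (simp add: mat_def)
qed

lemma diagonal_iff: "diagonal_mat A \<longleftrightarrow> monomial_mat A \<and> perm_part A = id"
proof
  assume "diagonal_mat A"
  then obtain d where d: "\<forall>i. d i \<noteq> 0" "A = diag_mat d" unfolding diagonal_mat_def by blast
  have e: "A$i$j = (if id i = j then d i else 0)" for i j using d by (simp add: diag_mat_def)
  show "monomial_mat A \<and> perm_part A = id" using mono_intro[OF permutes_id _ e] d by auto
next
  assume a: "monomial_mat A \<and> perm_part A = id"
  have "A$i$j = diag_mat (dd A) $i$j" for i j using mono_entry[of A i j] a by (simp add: diag_mat_def)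
  then have "A = diag_mat (dd A)" by (simp add: vec_eq_iff)
  then show "diagonal_mat A" unfolding diagonal_mat_def using mono_dd a by blast
qed



lemma block_lemma:
  fixes R :: "'n::finite \<Rightarrow> 'n \<Rightarrow> bool" and T :: "('n \<Rightarrow> 'n) set"
  assumes p: "prime CARD('n)"
    and refl: "\<And>i. R i i" and sym: "\<And>i j. R i j \<Longrightarrow> R j i" and trans: "\<And>i j k. R i j \<Longrightarrow> R j k \<Longrightarrow> R i k"
    and inj: "\<And>\<tau>. \<tau> \<in> T \<Longrightarrow> inj \<tau>"
    and pres: "\<And>\<tau> i j. \<tau> \<in> T \<Longrightarrow> R i j \<Longrightarrow> R (\<tau> i) (\<tau> j)"
    and tr: "\<And>i j. \<exists>\<tau>\<in>T. \<tau> i = j"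
  shows "(\<forall>i j. R i j \<longrightarrow> i = j) \<or> (\<forall>i j. R i j)"
proof -
  define cl where "cl i = {j. R i j}" for i
  have le: "card (cl i) \<le> card (cl j)" for i j
  proof -
    obtain \<tau> where t: "\<tau> \<in> T" "\<tau> i = j" using tr by blast
    have "\<tau> ` cl i \<subseteq> cl j" using pres[OF t(1)] t(2) by (auto simp: cl_def)
    moreover have "card (\<tau> ` cl i) = card (cl i)" using inj[OF t(1)] by (simp add: card_image inj_on_subset)
    ultimately show ?thesis by (metis card_mono finite)
  qed
  obtain i0 :: 'n where True by blast
  define k where "k = card (cl i0)"
  have ck: "card (cl i) = k" for i using le[of i i0] le[of i0 i] k_def by simp
  have disj: "\<forall>c1\<in>range cl. \<forall>c2\<in>range cl. c1 \<noteq> c2 \<longrightarrow> c1 \<inter> c2 = {}"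
  proof (intro ballI impI)
    fix c1 c2 assume "c1 \<in> range cl" "c2 \<in> range cl" "c1 \<noteq> c2"
    then obtain a b where ab: "c1 = cl a" "c2 = cl b" by auto
    show "c1 \<inter> c2 = {}"
    proof (rule ccontr)
      assume "c1 \<inter> c2 \<noteq> {}"
      then obtain x where "R a x" "R b x" using ab by (auto simp: cl_def)
      then have "R a b" using sym trans by metis
      then have "R a y \<longleftrightarrow> R b y" for y using sym trans by metis
      then have "cl a = cl b" unfolding cl_def by auto
      then show False using ab \<open>c1 \<noteq> c2\<close> by simp
    qed
  qed
  have un: "\<Union>(range cl) = UNIV" using refl by (auto simp: cl_def)
  have "k * card (range cl) = card (\<Union>(range cl))"
    by (rule card_partition) (use ck disj in auto)
  then have "k * card (range cl) = CARD('n)" using un by simp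
  then have "k dvd CARD('n)" by (metis dvd_triv_left)
  then have "k = 1 \<or> k = CARD('n)" using p by (simp add: prime_nat_iff)
  then show ?thesis
  proof
    assume "k = 1"
    have c1: "cl i = {i}" for i
    proof -
      obtain x where x: "cl i = {x}" using ck[of i] \<open>k = 1\<close> card_1_singletonE by blast
      have "i \<in> cl i" using refl by (simp add: cl_def)
      then show ?thesis using x by simp
    qed
    have "R i j \<longrightarrow> i = j" for i j
    proof
      assume "R i j" then have "j \<in> cl i" by (simp add: cl_def)
      then show "i = j" using c1[of i] by simp
    qed
    then show ?thesis by blast
  next
    assume "k = CARD('n)"
    then have "cl i = UNIV" for i using ck[of i] by (intro card_subset_eq) auto
    then have "R i j" for i j unfolding cl_def by (metis UNIV_I mem_Collect_eq)
    then show ?thesis by blast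
  qed
qed

locale mgrp =
  fixes G :: "(complex^'a::finite^'a) set"
  assumes grp: "group (mat_group G)" and mono: "\<forall>A\<in>G. monomial_mat A"
begin

definition iv where "iv a = inv\<^bsub>mat_group G\<^esub> a"

lemma one_in: "mat 1 \<in> G"
  using group.is_monoid[OF grp] monoid.one_closed unfolding mat_group_def by fastforce

lemma mult_in: "a \<in> G \<Longrightarrow> b \<in> G \<Longrightarrow> a ** b \<in> G"
  using monoid.m_closed[OF group.is_monoid[OF grp], of a b] unfolding mat_group_def by simp

lemma iv_in: "a \<in> G \<Longrightarrow> iv a \<in> G"
  using group.inv_closed[OF grp, of a] unfolding iv_def mat_group_def by simp

lemma iv_r: "a \<in> G \<Longrightarrow> a ** iv a = mat 1"
  using group.r_inv[OF grp, of a] unfolding iv_def by (simp add: mat_group_def)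

lemma iv_l: "a \<in> G \<Longrightarrow> iv a ** a = mat 1"
  using group.l_inv[OF grp, of a] unfolding iv_def by (simp add: mat_group_def)

lemma monoG: "a \<in> G \<Longrightarrow> monomial_mat a" using mono by blast

lemma pp_perm: "a \<in> G \<Longrightarrow> perm_part a permutes UNIV" using mono_perm monoG by blast

lemma pp_inj: "a \<in> G \<Longrightarrow> inj (perm_part a)" using pp_perm permutes_inj by blast

lemma pp_iv: "a \<in> G \<Longrightarrow> perm_part a (perm_part (iv a) i) = i" "a \<in> G \<Longrightarrow> perm_part (iv a) (perm_part a i) = i"
proof -
  assume a: "a \<in> G"
  have "perm_part (iv a ** a) = id" "perm_part (a ** iv a) = id"
    using iv_l[OF a] iv_r[OF a] mat_mono(2)[of 1] by auto
  then show "perm_part a (perm_part (iv a) i) = i" "perm_part (iv a) (perm_part a i) = i"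
    using mono_mult(2)[OF monoG[OF iv_in[OF a]] monoG[OF a]] mono_mult(2)[OF monoG[OF a] monoG[OF iv_in[OF a]]]
    by (metis comp_apply id_apply)+
qed

lemma dd_iv: "a \<in> G \<Longrightarrow> dd a i * dd (iv a) (perm_part a i) = 1"
proof -
  assume a: "a \<in> G"
  have "dd (a ** iv a) i = 1" using iv_r[OF a] mat_mono(3)[of 1] by simp
  then show ?thesis using mono_mult(3)[OF monoG[OF a] monoG[OF iv_in[OF a]]] by simp
qed

lemma vec_act: "a \<in> G \<Longrightarrow> (a *v v)$i = dd a i * v$(perm_part a i)"
  using mono_mult_vec monoG by blast

end

lemma csub_add: "csubspace_vec W \<Longrightarrow> x \<in> W \<Longrightarrow> y \<in> W \<Longrightarrow> x + y \<in> W"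
  and csub_scale: "csubspace_vec W \<Longrightarrow> x \<in> W \<Longrightarrow> c *s x \<in> W"
  and csub_zero: "csubspace_vec W \<Longrightarrow> 0 \<in> W"
  unfolding csubspace_vec_def by blast+

locale mgrp_tr = mgrp +
  assumes tr: "\<forall>i j. \<exists>g\<in>G. perm_part g i = j"
begin

lemma part1:
  assumes p: "prime CARD('a)" and a: "a \<in> G" "diagonal_mat a" "\<not> (\<exists>c. a = mat c)"
  shows "irreducible_mat_group G"
proof -
  define R where "R i j = (\<forall>b\<in>G. diagonal_mat b \<longrightarrow> dd b i = dd b j)" for i j
  have pres: "R (perm_part g i) (perm_part g j)" if g: "g \<in> G" and r: "R i j" for g i j
    unfolding R_def
  proof (intro ballI impI)
    fix b assume b: "b \<in> G" "diagonal_mat b"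
    have pb: "perm_part b = id" using b diagonal_iff by blast
    define c where "c = g ** b ** iv g"
    have cG: "c \<in> G" using b g by (simp add: c_def mult_in iv_in)
    have mgb: "monomial_mat (g ** b)" using mono_mult(1) monoG b g by blast
    have ppc: "perm_part c = id"
      unfolding c_def using mono_mult(2)[OF mgb monoG[OF iv_in[OF g]]] mono_mult(2)[OF monoG[OF g] monoG[OF b(1)]] pb
        pp_iv[OF g] by auto
    have cd: "diagonal_mat c" using ppc cG monoG diagonal_iff by blast
    have ddc: "dd c x = dd b (perm_part g x)" for x
    proof -
      have "dd c x = dd g x * dd b (perm_part g x) * dd (iv g) (perm_part g x)"
        unfolding c_def using mono_mult(3)[OF mgb monoG[OF iv_in[OF g]]] mono_mult(3)[OF monoG[OF g] monoG[OF b(1)]]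
          mono_mult(2)[OF monoG[OF g] monoG[OF b(1)]] pb by simp
      also have "\<dots> = dd b (perm_part g x) * (dd g x * dd (iv g) (perm_part g x))" by simp
      also have "\<dots> = dd b (perm_part g x)" using dd_iv[OF g] by simp
      finally show ?thesis .
    qed
    show "dd b (perm_part g i) = dd b (perm_part g j)" using r cG cd ddc unfolding R_def by metis
  qed
  have "(\<forall>i j. R i j \<longrightarrow> i = j) \<or> (\<forall>i j. R i j)"
  proof (rule block_lemma[where T="perm_part ` G"])
    show "prime CARD('a)" using p .
    show "\<And>i. R i i" "\<And>i j. R i j \<Longrightarrow> R j i" "\<And>i j k. R i j \<Longrightarrow> R j k \<Longrightarrow> R i k"
      unfolding R_def by metis+
    show "\<And>\<tau>. \<tau> \<in> perm_part ` G \<Longrightarrow> inj \<tau>" using pp_inj by blast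
    show "\<And>\<tau> i j. \<tau> \<in> perm_part ` G \<Longrightarrow> R i j \<Longrightarrow> R (\<tau> i) (\<tau> j)" using pres by blast
    show "\<And>i j. \<exists>\<tau>\<in>perm_part ` G. \<tau> i = j" using tr by blast
  qed
  moreover have "\<not> (\<forall>i j. R i j)"
  proof
    assume all: "\<forall>i j. R i j"
    obtain i0 :: 'a where True by blast
    have "a = mat (dd a i0)"
    proof -
      have pa: "perm_part a = id" using a diagonal_iff by blast
      have "a$i$j = mat (dd a i0) $i$j" for i j
      proof -
        have "dd a i = dd a i0" using all a unfolding R_def by blast
        then show ?thesis using mono_entry[OF monoG[OF a(1)], of i j] pa by (cases "i = j") (auto simp: mat_def)
      qed
      then show ?thesis by (simp add: vec_eq_iff)
    qed
    then show False using a by blast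
  qed
  ultimately have sep: "\<And>i j. i \<noteq> j \<Longrightarrow> \<exists>b\<in>G. diagonal_mat b \<and> dd b i \<noteq> dd b j"
    unfolding R_def by blast
  show ?thesis
    unfolding irreducible_mat_group_def
  proof
    assume "\<exists>W. csubspace_vec W \<and> W \<noteq> {0} \<and> W \<noteq> UNIV \<and> (\<forall>g\<in>G. \<forall>w\<in>W. g *v w \<in> W)"
    then obtain W where W: "csubspace_vec W" "W \<noteq> {0}" "W \<noteq> UNIV" and inv: "\<And>g w. g \<in> G \<Longrightarrow> w \<in> W \<Longrightarrow> g *v w \<in> W"
      by blast
    obtain w where w: "w \<in> W" "w \<noteq> 0" using W csub_zero by blast
    then obtain i where wi: "w$i \<noteq> 0" by (metis vec_eq_iff zero_index)
    have step: "\<exists>v\<in>W. v$i = w$i \<and> (\<forall>k\<in>S. v$k = 0)" if "finite S" "i \<notin> S" for S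
      using that
    proof (induction S rule: finite_induct)
      case empty then show ?case using w by blast
    next
      case (insert j S)
      then obtain v where v: "v \<in> W" "v$i = w$i" "\<forall>k\<in>S. v$k = 0" by auto
      have "i \<noteq> j" using insert by auto
      then obtain b where b: "b \<in> G" "diagonal_mat b" "dd b i \<noteq> dd b j" using sep by metis
      have pb: "perm_part b = id" using b diagonal_iff by blast
      define v' where "v' = (1 / (dd b i - dd b j)) *s (b *v v + (- dd b j) *s v)"
      have v'W: "v' \<in> W" unfolding v'_def using W(1) v(1) inv[OF b(1) v(1)]
        by (intro csub_scale csub_add) auto
      have v'k: "v'$k = (dd b k - dd b j) * v$k / (dd b i - dd b j)" for k
        unfolding v'_def using vec_act[OF b(1)] pb by (simp add: algebra_simps divide_inverse)
      have "v'$i = w$i" using v'k[of i] v(2) b(3) by simp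
      moreover have "\<forall>k\<in>insert j S. v'$k = 0" using v'k v(3) by auto
      ultimately show ?case using v'W by blast
    qed
    obtain v where v: "v \<in> W" "v$i = w$i" "\<forall>k. k \<noteq> i \<longrightarrow> v$k = 0"
      using step[of "UNIV - {i}"] by auto
    have ax_i: "axis i 1 \<in> W"
    proof -
      have "axis i 1 = (1 / w$i) *s v" using v wi by (auto simp: vec_eq_iff axis_def)
      then show ?thesis using csub_scale[OF W(1) v(1)] by simp
    qed
    have ax: "axis j 1 \<in> W" for j
    proof -
      obtain g where g: "g \<in> G" "perm_part g j = i" using tr by blast
      have "(g *v axis i 1) $ k = (if k = j then dd g j else 0)" for k
        using vec_act[OF g(1)] g pp_inj[OF g(1)] by (auto simp: axis_def inj_eq)
      then have "axis j 1 = (1 / dd g j) *s (g *v axis i 1)"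
        using mono_dd[OF monoG[OF g(1)]] by (auto simp: vec_eq_iff axis_def)
      then show ?thesis using csub_scale[OF W(1) inv[OF g(1) ax_i]] by simp
    qed
    have "(\<chi> k. if k \<in> S then x$k else 0) \<in> W" if "finite S" for S x
      using that
    proof (induction S rule: finite_induct)
      case empty
      have "(\<chi> k. if k \<in> {} then x$k else 0) = (0::complex^'a)" by (simp add: vec_eq_iff)
      then show ?case using csub_zero[OF W(1)] by simp
    next
      case (insert j S)
      have "(\<chi> k. if k \<in> insert j S then x$k else 0) = (\<chi> k. if k \<in> S then x$k else 0) + (x$j) *s axis j 1"
        using insert by (auto simp: vec_eq_iff axis_def)
      then show ?case using insert csub_add[OF W(1)] csub_scale[OF W(1) ax] by simp
    qed
    from this[of UNIV] have "x \<in> W" for x by (simp add: vec_eq_iff)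
    then show False using W(3) by blast
  qed
qed

end



context mgrp begin

lemma mg_simps[simp]: "carrier (mat_group G) = G" "(\<otimes>\<^bsub>mat_group G\<^esub>) = (**)" "\<one>\<^bsub>mat_group G\<^esub> = mat 1"
  by (auto simp: mat_group_def)

lemma iv_iv: "a \<in> G \<Longrightarrow> iv (iv a) = a"
  unfolding iv_def using group.inv_inv[OF grp, of a] by simp

definition DS where "DS n = (derived (mat_group G) ^^ n) G"

lemma DS_subgroup: "subgroup (DS n) (mat_group G)"
  unfolding DS_def using group.exp_of_derived_is_subgroup[OF grp group.subgroup_self[OF grp]] by simp

lemma DS_normal: "DS n \<lhd> mat_group G"
proof (induction n)
  case 0 then show ?case unfolding DS_def using group.normal_self[OF grp] by simp
next
  case (Suc n) then show ?case unfolding DS_def using group.derived_is_normal[OF grp] by simp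
qed

lemma DS_comm: "a \<in> DS n \<Longrightarrow> b \<in> DS n \<Longrightarrow> a ** b ** iv a ** iv b \<in> DS (Suc n)"
proof -
  assume ab: "a \<in> DS n" "b \<in> DS n"
  have "a \<otimes>\<^bsub>mat_group G\<^esub> b \<otimes>\<^bsub>mat_group G\<^esub> inv\<^bsub>mat_group G\<^esub> a \<otimes>\<^bsub>mat_group G\<^esub> inv\<^bsub>mat_group G\<^esub> b
     \<in> derived_set (mat_group G) (DS n)" using ab by blast
  then have "a \<otimes>\<^bsub>mat_group G\<^esub> b \<otimes>\<^bsub>mat_group G\<^esub> inv\<^bsub>mat_group G\<^esub> a \<otimes>\<^bsub>mat_group G\<^esub> inv\<^bsub>mat_group G\<^esub> b
     \<in> DS (Suc n)" unfolding DS_def derived_def by (simp add: generate.incl)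
  then show ?thesis by (simp add: iv_def)
qed

lemma exists_N:
  assumes solv: "solvable (mat_group G)" and nd: "\<exists>g\<in>G. \<not> diagonal_mat g"
  shows "\<exists>N. N \<subseteq> G \<and> mat 1 \<in> N \<and> (\<forall>a\<in>N. \<forall>b\<in>N. a ** b \<in> N) \<and> (\<forall>a\<in>N. iv a \<in> N)
     \<and> (\<forall>g\<in>G. \<forall>n\<in>N. g ** n ** iv g \<in> N) \<and> (\<forall>a\<in>N. \<forall>b\<in>N. perm_part a \<circ> perm_part b = perm_part b \<circ> perm_part a)
     \<and> (\<exists>n\<in>N. \<not> diagonal_mat n)"
proof -
  obtain n0 where n0: "DS n0 = {mat 1}"
    using group.solvable_iff_trivial_derived_seq[OF grp] solv unfolding DS_def by auto
  define P where "P m = (\<forall>x\<in>DS m. diagonal_mat x)" for m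
  have "diagonal_mat (mat 1 :: complex^'a^'a)" by (metis diagonal_iff mat_mono(1,2) one_neq_zero)
  then have Pn0: "P n0" using n0 unfolding P_def by simp
  have nP0: "\<not> P 0" using nd unfolding P_def DS_def by simp
  define m where "m = (LEAST m. P m)"
  have Pm: "P m" unfolding m_def using Pn0 by (rule LeastI)
  have m0: "m \<noteq> 0" using Pm nP0 by (metis gr0I)
  define k where "k = m - 1"
  have Pk: "\<not> P k" unfolding k_def using m0 not_less_Least[of "m - 1" P] m_def by simp
  have PSk: "P (Suc k)" using m0 Pm k_def by simp
  define N where "N = DS k"
  have sg: "subgroup N (mat_group G)" unfolding N_def by (rule DS_subgroup)
  have NG: "N \<subseteq> G" using subgroup.subset[OF sg] by simp
  have comm: "perm_part a \<circ> perm_part b = perm_part b \<circ> perm_part a" if a: "a \<in> N" and b: "b \<in> N" for a b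
  proof -
    have aG: "a \<in> G" and bG: "b \<in> G" using a b NG by auto
    define c where "c = a ** b ** iv a ** iv b"
    have cD: "c \<in> DS (Suc k)" unfolding c_def using DS_comm a b N_def by simp
    then have "diagonal_mat c" using PSk unfolding P_def by blast
    then have pc: "perm_part c = id" using diagonal_iff by blast
    have cG: "c \<in> G" unfolding c_def using aG bG by (simp add: mult_in iv_in)
    have "c ** b ** a = a ** b ** (iv a ** (iv b ** b) ** a)"
      unfolding c_def by (simp add: matrix_mul_assoc)
    also have "\<dots> = a ** b" using iv_l[OF aG] iv_l[OF bG] by (simp add: matrix_mul_lid matrix_mul_rid)
    finally have e: "c ** b ** a = a ** b" .
    have "perm_part (a ** b) = perm_part b \<circ> perm_part a" using mono_mult(2) monoG aG bG by blast
    moreover have "perm_part (c ** b ** a) = perm_part a \<circ> (perm_part b \<circ> perm_part c)"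
      using mono_mult(2) mono_mult(1) monoG aG bG cG by metis
    ultimately show ?thesis using e pc by simp
  qed
  show ?thesis
  proof (intro exI conjI)
    show "N \<subseteq> G" by (rule NG)
    show "mat 1 \<in> N" using subgroup.one_closed[OF sg] by simp
    show "\<forall>a\<in>N. \<forall>b\<in>N. a ** b \<in> N" using subgroup.m_closed[OF sg] by simp
    show "\<forall>a\<in>N. iv a \<in> N" using subgroup.m_inv_closed[OF sg] by (simp add: iv_def)
    show "\<forall>g\<in>G. \<forall>n\<in>N. g ** n ** iv g \<in> N"
      using normal.inv_op_closed2[OF DS_normal[of k]] unfolding N_def by (simp add: iv_def)
    show "\<forall>a\<in>N. \<forall>b\<in>N. perm_part a \<circ> perm_part b = perm_part b \<circ> perm_part a" using comm by blast
    show "\<exists>n\<in>N. \<not> diagonal_mat n" using Pk unfolding P_def N_def by blast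
  qed
qed

end



locale p2 =
  fixes G :: "(complex^'a::finite^'a) set" and N :: "(complex^'a^'a) set"
  assumes grp: "group (mat_group G)" and mono: "\<forall>A\<in>G. monomial_mat A"
    and tr: "\<forall>i j. \<exists>g\<in>G. perm_part g i = j"
    and p: "prime CARD('a)" and fin: "finite G"
    and H0: "\<forall>g\<in>G. diagonal_mat g \<longrightarrow> (\<exists>c. g = mat c)"
    and irr: "irreducible_mat_group G"
    and NG: "N \<subseteq> G" and N1: "mat 1 \<in> N" and Nm: "\<forall>a\<in>N. \<forall>b\<in>N. a ** b \<in> N"
    and Ni: "\<forall>a\<in>N. inv\<^bsub>mat_group G\<^esub> a \<in> N"
    and Nn: "\<forall>g\<in>G. \<forall>n\<in>N. g ** n ** inv\<^bsub>mat_group G\<^esub> g \<in> N"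
    and Nc: "\<forall>a\<in>N. \<forall>b\<in>N. perm_part a \<circ> perm_part b = perm_part b \<circ> perm_part a"
    and Nd: "\<exists>n\<in>N. \<not> diagonal_mat n"

sublocale p2 \<subseteq> mgrp_tr G
  unfolding mgrp_tr_def mgrp_def mgrp_tr_axioms_def using grp mono tr by auto

context p2 begin

lemma card_ge2: "CARD('a) \<ge> 2" using p prime_ge_2_nat by blast

lemma Niv: "a \<in> N \<Longrightarrow> iv a \<in> N" using Ni iv_def by simp
lemma Nnorm: "g \<in> G \<Longrightarrow> n \<in> N \<Longrightarrow> g ** n ** iv g \<in> N" using Nn iv_def by simp
lemma NinG: "a \<in> N \<Longrightarrow> a \<in> G" using NG by blast
lemma Nmult: "a \<in> N \<Longrightarrow> b \<in> N \<Longrightarrow> a ** b \<in> N" using Nm by blast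

lemma pp_mult: "a \<in> G \<Longrightarrow> b \<in> G \<Longrightarrow> perm_part (a ** b) = perm_part b \<circ> perm_part a"
  using mono_mult(2) monoG by blast

lemma pp_one: "perm_part (mat 1 :: complex^'a^'a) = id" using mat_mono(2)[of 1] by simp

lemma Ncomm: "a \<in> N \<Longrightarrow> b \<in> N \<Longrightarrow> perm_part a (perm_part b x) = perm_part b (perm_part a x)"
  using Nc by (metis comp_apply)

lemma Ntrans: "\<exists>n\<in>N. perm_part n x = y"
proof -
  define R where "R x y = (\<exists>n\<in>N. perm_part n x = y)" for x y
  have "(\<forall>i j. R i j \<longrightarrow> i = j) \<or> (\<forall>i j. R i j)"
  proof (rule block_lemma[where T="perm_part ` G"])
    show "prime CARD('a)" using p .
    show "R i i" for i unfolding R_def using N1 pp_one by force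
    show "R j i" if r: "R i j" for i j
    proof -
      obtain n where n: "n \<in> N" "perm_part n i = j" using r unfolding R_def by blast
      then show ?thesis unfolding R_def using Niv[OF n(1)] pp_iv(2)[OF NinG[OF n(1)]] by blast
    qed
    show "R i k" if r1: "R i j" and r2: "R j k" for i j k
    proof -
      obtain n where n: "n \<in> N" "perm_part n i = j" using r1 unfolding R_def by blast
      obtain m where m: "m \<in> N" "perm_part m j = k" using r2 unfolding R_def by blast
      have "perm_part (n ** m) i = k" using pp_mult[OF NinG[OF n(1)] NinG[OF m(1)]] n m by simp
      then show ?thesis unfolding R_def using Nmult[OF n(1) m(1)] by blast
    qed
    show "\<And>\<tau>. \<tau> \<in> perm_part ` G \<Longrightarrow> inj \<tau>" using pp_inj by blast
    show "R (\<tau> i) (\<tau> j)" if t: "\<tau> \<in> perm_part ` G" and r: "R i j" for \<tau> i j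
    proof -
      obtain g where g: "g \<in> G" "\<tau> = perm_part g" using t by blast
      obtain n where n: "n \<in> N" "perm_part n i = j" using r unfolding R_def by blast
      have n': "iv g ** n ** g \<in> N" using Nnorm[OF iv_in[OF g(1)] n(1)] iv_iv[OF g(1)] by simp
      have "perm_part (iv g ** n ** g) (\<tau> i) = \<tau> j"
        using pp_mult[OF mult_in[OF iv_in[OF g(1)] NinG[OF n(1)]] g(1)] pp_mult[OF iv_in[OF g(1)] NinG[OF n(1)]]
          pp_iv[OF g(1)] g(2) n(2) by simp
      then show ?thesis unfolding R_def using n' by blast
    qed
    show "\<And>i j. \<exists>\<tau>\<in>perm_part ` G. \<tau> i = j" using tr by blast
  qed
  moreover have "\<not> (\<forall>i j. R i j \<longrightarrow> i = j)"
  proof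
    assume a: "\<forall>i j. R i j \<longrightarrow> i = j"
    obtain n where n: "n \<in> N" "\<not> diagonal_mat n" using Nd by blast
    have "perm_part n \<noteq> id" using n(2) diagonal_iff monoG[OF NinG[OF n(1)]] by metis
    then obtain z where z: "perm_part n z \<noteq> z" by (metis eq_id_iff)
    have "R z (perm_part n z)" unfolding R_def using n(1) by blast
    then show False using a z by (metis (no_types))
  qed
  ultimately have "R x y" by blast
  then show ?thesis unfolding R_def .
qed

lemma Nreg: "n \<in> N \<Longrightarrow> perm_part n x = x \<Longrightarrow> perm_part n = id"
proof
  fix y assume n: "n \<in> N" "perm_part n x = x"
  obtain m where m: "m \<in> N" "perm_part m x = y" using Ntrans by blast
  show "perm_part n y = id y" using Ncomm[OF n(1) m(1), of x] n m by simp
qed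

lemma Ndet: "n1 \<in> N \<Longrightarrow> n2 \<in> N \<Longrightarrow> perm_part n1 x = perm_part n2 x \<Longrightarrow> perm_part n1 = perm_part n2"
proof -
  assume n: "n1 \<in> N" "n2 \<in> N" "perm_part n1 x = perm_part n2 x"
  have m: "n1 ** iv n2 \<in> N" using Nmult[OF n(1) Niv[OF n(2)]] .
  have pm: "perm_part (n1 ** iv n2) = perm_part (iv n2) \<circ> perm_part n1"
    using pp_mult[OF NinG[OF n(1)] iv_in[OF NinG[OF n(2)]]] .
  have "perm_part (n1 ** iv n2) x = x" using pm n(3) pp_iv(2)[OF NinG[OF n(2)]] by simp
  then have "perm_part (n1 ** iv n2) = id" using Nreg[OF m] by blast
  then have "perm_part n2 (perm_part (iv n2) (perm_part n1 y)) = perm_part n2 y" for y using pm by (metis comp_apply id_apply)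
  then show ?thesis using pp_iv(1)[OF NinG[OF n(2)]] by auto
qed

end



lemma funpow_id': "(id ^^ k) = (id :: 'b \<Rightarrow> 'b)"
  by (induction k) auto

context p2 begin

definition hh where "hh = (SOME n. n \<in> N \<and> \<not> diagonal_mat n)"

lemma hh: "hh \<in> N" "\<not> diagonal_mat hh"
  using someI_ex[OF Nd[unfolded Bex_def]] unfolding hh_def by auto

definition sg where "sg = perm_part hh"

lemma hhG: "hh \<in> G" using hh NinG by blast

lemma sg_nofix: "sg x \<noteq> x"
proof
  assume "sg x = x"
  then have "perm_part hh = id" using Nreg[OF hh(1)] sg_def by simp
  then show False using hh(2) diagonal_iff monoG[OF hhG] by metis
qed

definition hp where "hp k = hh [^]\<^bsub>mat_group G\<^esub> (k::nat)"

lemma hp_simps: "hp 0 = mat 1" "hp (Suc k) = hp k ** hh"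
  unfolding hp_def using monoid.nat_pow_Suc[OF group.is_monoid[OF grp]] monoid.nat_pow_0[OF group.is_monoid[OF grp]] by simp_all

lemma hp_N: "hp k \<in> N"
  by (induction k) (auto simp: hp_simps N1 Nmult hh)

lemma hp_pp: "perm_part (hp k) = sg ^^ k"
proof (induction k)
  case 0 then show ?case by (simp add: hp_simps pp_one)
next
  case (Suc k)
  then show ?case using pp_mult[OF NinG[OF hp_N] hhG, of k] by (simp add: hp_simps sg_def)
qed

lemma sg_order: "\<exists>M>0. sg ^^ M = id"
proof -
  have "hp (order (mat_group G)) = mat 1"
    unfolding hp_def using group.pow_order_eq_1[OF grp, of hh] hhG by simp
  then have "sg ^^ (order (mat_group G)) = id" using hp_pp pp_one by metis
  moreover have "order (mat_group G) > 0" unfolding order_def using fin one_in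
    by (simp add: card_gt_0_iff) blast
  ultimately show ?thesis by blast
qed

lemma sg_comm: "n \<in> N \<Longrightarrow> perm_part n (sg x) = sg (perm_part n x)"
  unfolding sg_def using Ncomm[OF _ hh(1)] by blast

lemma comm_pow: "(\<And>x. \<pi> (sg x) = sg (\<pi> x)) \<Longrightarrow> \<pi> ((sg ^^ k) x) = (sg ^^ k) (\<pi> x)"
  by (induction k) auto

lemma sg_total: "\<exists>k. (sg ^^ k) x = y"
proof -
  obtain M where M: "M > 0" "sg ^^ M = id" using sg_order by blast
  define R where "R x y = (\<exists>k. (sg ^^ k) x = y)" for x y
  have "(\<forall>i j. R i j \<longrightarrow> i = j) \<or> (\<forall>i j. R i j)"
  proof (rule block_lemma[where T="perm_part ` N"])
    show "prime CARD('a)" using p .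
    show "R i i" for i unfolding R_def by (metis funpow_0)
    show "R j i" if r: "R i j" for i j
    proof -
      obtain k where k: "(sg ^^ k) i = j" using r unfolding R_def by blast
      have "(sg ^^ (M * k - k)) j = (sg ^^ (M * k - k + k)) i" using k by (simp add: funpow_add)
      also have "M * k - k + k = M * k"
      proof -
        have "k \<le> M * k" using M(1) by (cases M) auto
        then show ?thesis by simp
      qed
      also have "(sg ^^ (M * k)) i = i" using M(2) by (simp add: funpow_mult[symmetric] funpow_id')
      finally show ?thesis unfolding R_def by blast
    qed
    show "R i k" if r1: "R i j" and r2: "R j k" for i j k
    proof -
      obtain a where a: "(sg ^^ a) i = j" using r1 unfolding R_def by blast
      obtain b where b: "(sg ^^ b) j = k" using r2 unfolding R_def by blast
      have "(sg ^^ (b + a)) i = k" using a b by (simp add: funpow_add)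
      then show ?thesis unfolding R_def by blast
    qed
    show "\<And>\<tau>. \<tau> \<in> perm_part ` N \<Longrightarrow> inj \<tau>" using pp_inj NinG by blast
    show "R (\<tau> i) (\<tau> j)" if t: "\<tau> \<in> perm_part ` N" and r: "R i j" for \<tau> i j
    proof -
      obtain n where n: "n \<in> N" "\<tau> = perm_part n" using t by blast
      obtain k where k: "(sg ^^ k) i = j" using r unfolding R_def by blast
      have "\<tau> ((sg ^^ k) i) = (sg ^^ k) (\<tau> i)" using comm_pow[of \<tau>] sg_comm n by blast
      then show ?thesis unfolding R_def using k by metis
    qed
    show "\<And>i j. \<exists>\<tau>\<in>perm_part ` N. \<tau> i = j" using Ntrans by blast
  qed
  moreover have "\<not> (\<forall>i j. R i j \<longrightarrow> i = j)"
  proof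
    assume a: "\<forall>i j. R i j \<longrightarrow> i = j"
    obtain z :: 'a where True by blast
    have "(sg ^^ 1) z = sg z" by simp
    then have "R z (sg z)" unfolding R_def by blast
    then show False using a sg_nofix[of z] by (metis (no_types))
  qed
  ultimately have "R x y" by (metis (no_types))
  then show ?thesis unfolding R_def .
qed

lemma cycle:
  shows "(sg ^^ CARD('a)) x0 = x0" "inj_on (\<lambda>k. (sg ^^ k) x0) {0..<CARD('a)}"
proof -
  define f where "f k = (sg ^^ k) x0" for k
  obtain M where M: "M > 0" "sg ^^ M = id" using sg_order by blast
  have ex: "0 < M \<and> f M = x0" using M by (simp add: f_def)
  define q where "q = (LEAST q. 0 < q \<and> f q = x0)"
  have q: "0 < q" "f q = x0" using LeastI[of "\<lambda>q. 0 < q \<and> f q = x0", OF ex] q_def by auto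
  have qmin: "\<not> (0 < r \<and> f r = x0)" if "r < q" for r using not_less_Least[of r "\<lambda>q. 0 < q \<and> f q = x0"] that q_def by blast
  have fqa: "(sg ^^ (q * a)) x0 = x0" for a
  proof (induction a)
    case 0 then show ?case by simp
  next
    case (Suc a)
    have "(sg ^^ (q * Suc a)) x0 = (sg ^^ q) ((sg ^^ (q * a)) x0)" by (simp add: funpow_add)
    then show ?case using Suc q(2) f_def by simp
  qed
  have fmod: "f k = f (k mod q)" for k
  proof -
    have "k = k mod q + q * (k div q)" by simp
    then have "f k = (sg ^^ (k mod q)) ((sg ^^ (q * (k div q))) x0)" unfolding f_def by (metis comp_apply funpow_add)
    then show ?thesis using fqa f_def by simp
  qed
  have surj: "f ` {0..<q} = UNIV"
  proof -
    have "y \<in> f ` {0..<q}" for y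
    proof -
      obtain k where "(sg ^^ k) x0 = y" using sg_total by blast
      then have "f (k mod q) = y" using fmod f_def by metis
      moreover have "k mod q < q" using q(1) by simp
      ultimately show ?thesis by force
    qed
    then show ?thesis by blast
  qed
  have inj: "inj_on f {0..<q}"
  proof (rule inj_onI)
    fix i j assume ij: "i \<in> {0..<q}" "j \<in> {0..<q}" "f i = f j"
    show "i = j"
    proof (rule ccontr)
      assume "i \<noteq> j"
      then consider "i < j" | "j < i" by linarith
      then show False
      proof cases
        case 1
        have "f j = (sg ^^ i) (f (j - i))" unfolding f_def using 1 by (metis comp_apply funpow_add le_add_diff_inverse less_imp_le_nat)
        then have "(sg ^^ i) (f (j - i)) = (sg ^^ i) x0" using ij(3) f_def by simp
        then have "f (j - i) = x0" using inj_fn[OF pp_inj[OF hhG], of i] unfolding sg_def by (meson injD)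
        moreover have "j - i < q" "0 < j - i" using 1 ij by auto
        ultimately show False using qmin[of "j - i"] by blast
      next
        case 2
        have "f i = (sg ^^ j) (f (i - j))" unfolding f_def using 2 by (metis comp_apply funpow_add le_add_diff_inverse less_imp_le_nat)
        then have "(sg ^^ j) (f (i - j)) = (sg ^^ j) x0" using ij(3) f_def by simp
        then have "f (i - j) = x0" using inj_fn[OF pp_inj[OF hhG], of j] unfolding sg_def by (meson injD)
        moreover have "i - j < q" "0 < i - j" using 2 ij by auto
        ultimately show False using qmin[of "i - j"] by blast
      qed
    qed
  qed
  have "card (f ` {0..<q}) = q" using card_image[OF inj] by simp
  then have qc: "q = CARD('a)" using surj by simp
  show "(sg ^^ CARD('a)) x0 = x0" using q(2) qc f_def by simp
  have "f = (\<lambda>k. (sg ^^ k) x0)" using f_def by (simp add: fun_eq_iff)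
  then show "inj_on (\<lambda>k. (sg ^^ k) x0) {0..<CARD('a)}" using inj qc by simp
qed

end



lemma root_exists: "(c::complex) \<noteq> 0 \<Longrightarrow> n > 0 \<Longrightarrow> \<exists>l. l ^ n = c"
proof -
  assume c: "c \<noteq> 0" and n: "n > 0"
  have "exp (Ln c / of_nat n) ^ n = exp (of_nat n * (Ln c / of_nat n))" by (rule exp_of_nat_mult[symmetric])
  also have "\<dots> = c" using c n by simp
  finally show ?thesis by blast
qed

lemma mat_scalar_vec: "(mat c :: complex^'n::finite^'n) *v x = c *s x"
  unfolding matrix_vector_mult_def mat_def by (simp add: vec_eq_iff if0_mult sum.delta cong: if_cong)

context p2 begin

definition x0 :: 'a where "x0 = undefined"

lemma per: "(sg ^^ k) x0 = (sg ^^ (k mod CARD('a))) x0"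
proof -
  have fqa: "(sg ^^ (CARD('a) * a)) x0 = x0" for a
  proof (induction a)
    case 0 then show ?case by simp
  next
    case (Suc a)
    have "(sg ^^ (CARD('a) * Suc a)) x0 = (sg ^^ CARD('a)) ((sg ^^ (CARD('a) * a)) x0)" by (simp add: funpow_add)
    then show ?case using Suc cycle(1) by simp
  qed
  have "k = k mod CARD('a) + CARD('a) * (k div CARD('a))" by simp
  then have "(sg ^^ k) x0 = (sg ^^ (k mod CARD('a))) ((sg ^^ (CARD('a) * (k div CARD('a)))) x0)" by (metis comp_apply funpow_add)
  then show ?thesis using fqa by simp
qed

definition ix where "ix y = (THE k. k < CARD('a) \<and> (sg ^^ k) x0 = y)"

lemma ix_uniq: "k < CARD('a) \<Longrightarrow> j < CARD('a) \<Longrightarrow> (sg ^^ k) x0 = (sg ^^ j) x0 \<Longrightarrow> k = j"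
  using cycle(2) unfolding inj_on_def by auto

lemma ix: "ix y < CARD('a)" "(sg ^^ (ix y)) x0 = y"
proof -
  obtain k where "(sg ^^ k) x0 = y" using sg_total by blast
  then have ex: "k mod CARD('a) < CARD('a) \<and> (sg ^^ (k mod CARD('a))) x0 = y" using per by simp
  have "ix y < CARD('a) \<and> (sg ^^ (ix y)) x0 = y"
    unfolding ix_def by (rule theI[of _ "k mod CARD('a)"]) (use ex ix_uniq in auto)
  then show "ix y < CARD('a)" "(sg ^^ (ix y)) x0 = y" by auto
qed

lemma ix_pow: "k < CARD('a) \<Longrightarrow> ix ((sg ^^ k) x0) = k"
  using ix ix_uniq by metis

definition ds where "ds t = dd hh ((sg ^^ t) x0)"

lemma ds_nz: "ds t \<noteq> 0" unfolding ds_def using mono_dd monoG hhG by blast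

definition cc where "cc = (\<Prod>t<CARD('a). ds t)"

definition lam where "lam = (SOME l. l ^ CARD('a) = cc)"

lemma lam: "lam ^ CARD('a) = cc" "lam \<noteq> 0"
proof -
  have "cc \<noteq> 0" unfolding cc_def using ds_nz by simp
  then show l: "lam ^ CARD('a) = cc" unfolding lam_def using root_exists[of cc "CARD('a)"] by (metis (mono_tags) someI_ex zero_less_card_finite)
  then show "lam \<noteq> 0" using \<open>cc \<noteq> 0\<close> by (metis zero_power zero_less_card_finite)
qed

definition v where "v = (\<chi> y. lam ^ (ix y) / (\<Prod>t<ix y. ds t))"

lemma v_nz: "v \<noteq> 0"
proof -
  have "ix x0 = 0" using ix_pow[of 0] by simp
  then have "v $ x0 = 1" unfolding v_def by simp
  then show ?thesis by (metis one_neq_zero zero_index)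
qed

lemma hh_eig: "hh *v v = lam *s v"
proof -
  have "(hh *v v) $ y = lam * v $ y" for y
  proof -
    define k where "k = ix y"
    have k: "k < CARD('a)" "(sg ^^ k) x0 = y" using ix k_def by auto
    have e1: "(hh *v v) $ y = ds k * v $ (sg y)"
      using vec_act[OF hhG] k(2) unfolding ds_def sg_def by simp
    have sy: "sg y = (sg ^^ Suc k) x0" using k(2) by simp
    have pk: "(\<Prod>t<k. ds t) \<noteq> 0" using ds_nz by simp
    show ?thesis
    proof (cases "Suc k < CARD('a)")
      case True
      then have "ix (sg y) = Suc k" unfolding sy by (rule ix_pow)
      then have "v $ (sg y) = lam ^ Suc k / ((\<Prod>t<k. ds t) * ds k)" unfolding v_def by simp
      then show ?thesis using e1 ds_nz[of k] pk unfolding v_def k_def by (simp add: field_simps)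
    next
      case False
      then have kk: "Suc k = CARD('a)" using k(1) by simp
      then have "sg y = x0" using sy cycle(1) by simp
      moreover have "ix x0 = 0" using ix_pow[of 0] by simp
      ultimately have vs: "v $ (sg y) = 1" unfolding v_def by simp
      have "cc = (\<Prod>t<k. ds t) * ds k" unfolding cc_def using kk[symmetric] by simp
      moreover have "lam * lam ^ k = cc" using lam(1) kk by (metis power_Suc)
      ultimately have "lam * (lam ^ k / (\<Prod>t<k. ds t)) = ds k" using pk by (simp add: field_simps)
      then show ?thesis using e1 vs unfolding v_def k_def by simp
    qed
  qed
  then show ?thesis by (simp add: vec_eq_iff)
qed

lemma hp_eig: "hp j *v v = (lam ^ j) *s v"
proof (induction j)
  case 0 then show ?case by (simp add: hp_simps)
next
  case (Suc j)
  have "hp (Suc j) *v v = hp j *v (hh *v v)" by (simp add: hp_simps matrix_vector_mul_assoc)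
  also have "\<dots> = lam *s (hp j *v v)" using hh_eig by (simp add: vector_scalar_commute)
  finally show ?case using Suc by simp
qed

lemma N_eig: "n \<in> N \<Longrightarrow> \<exists>c. n *v v = c *s v"
proof -
  assume n: "n \<in> N"
  obtain j where j: "(sg ^^ j) x0 = perm_part n x0" using sg_total by blast
  have "perm_part n x0 = perm_part (hp j) x0" using j hp_pp by simp
  then have "perm_part n = perm_part (hp j)" using Ndet[OF n hp_N] by blast
  define z where "z = n ** iv (hp j)"
  have nG: "n \<in> G" using n NinG by blast
  have hG: "hp j \<in> G" using hp_N NinG by blast
  have zG: "z \<in> G" unfolding z_def using nG hG by (simp add: mult_in iv_in)
  have "perm_part z = perm_part (iv (hp j)) \<circ> perm_part (hp j)"
    unfolding z_def using pp_mult[OF nG iv_in[OF hG]] \<open>perm_part n = perm_part (hp j)\<close> by simp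
  then have "perm_part z = id" using pp_iv(2)[OF hG] by auto
  then have "diagonal_mat z" using diagonal_iff monoG[OF zG] by metis
  then obtain c where c: "z = mat c" using H0 zG by blast
  have "z ** hp j = n" unfolding z_def using iv_l[OF hG] by (simp add: matrix_mul_assoc[symmetric])
  then have "n *v v = z *v (hp j *v v)" by (simp add: matrix_vector_mul_assoc)
  also have "\<dots> = (c * lam ^ j) *s v" using c hp_eig by (simp add: mat_scalar_vec)
  finally show ?thesis by blast
qed

end



context p2 begin

definition St where "St = {\<tau>. \<exists>g\<in>G. perm_part g = \<tau> \<and> \<tau> x0 = x0}"
definition rep where "rep \<tau> = (SOME g. g \<in> G \<and> perm_part g = \<tau>)"

lemma rep: "\<tau> \<in> St \<Longrightarrow> rep \<tau> \<in> G \<and> perm_part (rep \<tau>) = \<tau>"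
  unfolding St_def rep_def by (rule someI_ex) blast

lemma St_fin: "finite St"
proof -
  have "St \<subseteq> perm_part ` G" unfolding St_def by blast
  then show ?thesis using fin finite_subset by blast
qed

lemma St_inj: "inj_on (\<lambda>\<tau>. \<tau> (sg x0)) St"
proof (rule inj_onI)
  fix \<tau>1 \<tau>2 assume t: "\<tau>1 \<in> St" "\<tau>2 \<in> St" "\<tau>1 (sg x0) = \<tau>2 (sg x0)"
  obtain g1 where g1: "g1 \<in> G" "perm_part g1 = \<tau>1" "\<tau>1 x0 = x0" using t(1) unfolding St_def by blast
  obtain g2 where g2: "g2 \<in> G" "perm_part g2 = \<tau>2" "\<tau>2 x0 = x0" using t(2) unfolding St_def by blast
  define g where "g = g1 ** iv g2"
  have gG: "g \<in> G" unfolding g_def using g1 g2 by (simp add: mult_in iv_in)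
  define \<rho> where "\<rho> = perm_part g"
  have \<rho>: "\<rho> = perm_part (iv g2) \<circ> \<tau>1" unfolding \<rho>_def g_def using pp_mult[OF g1(1) iv_in[OF g2(1)]] g1 by simp
  have iv2: "perm_part (iv g2) (\<tau>2 y) = y" for y using pp_iv(2)[OF g2(1)] g2 by simp
  have r0: "\<rho> x0 = x0" using \<rho> g1(3) g2(3) iv2[of x0] by simp
  have r1: "\<rho> (sg x0) = sg x0" using \<rho> t(3) iv2 by simp
  define n' where "n' = iv g ** hh ** g"
  have n'N: "n' \<in> N" unfolding n'_def using Nnorm[OF iv_in[OF gG] hh(1)] iv_iv[OF gG] by simp
  have pn': "perm_part n' = \<rho> \<circ> sg \<circ> perm_part (iv g)"
    unfolding n'_def \<rho>_def sg_def using pp_mult[OF mult_in[OF iv_in[OF gG] hhG] gG] pp_mult[OF iv_in[OF gG] hhG]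
    by (simp add: o_assoc)
  have ivg0: "perm_part (iv g) x0 = x0" using pp_iv(2)[OF gG, of x0] r0 \<rho>_def by simp
  have "perm_part n' x0 = perm_part hh x0" using pn' ivg0 r1 sg_def by simp
  then have "perm_part n' = perm_part hh" using Ndet[OF n'N hh(1)] by blast
  then have "\<rho> (sg (perm_part (iv g) y)) = sg y" for y using pn' sg_def by (metis comp_apply)
  then have rc: "\<rho> (sg z) = sg (\<rho> z)" for z using pp_iv(2)[OF gG, of z] \<rho>_def by metis
  have "\<rho> y = y" for y
  proof -
    obtain k where k: "(sg ^^ k) x0 = y" using sg_total by blast
    have "\<rho> ((sg ^^ k) x0) = (sg ^^ k) (\<rho> x0)" using comm_pow[of \<rho>] rc by blast
    then show ?thesis using k r0 by simp
  qed
  then have "perm_part (iv g2) (\<tau>1 y) = y" for y using \<rho> by (metis comp_apply)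
  then have "\<tau>1 y = \<tau>2 y" for y using pp_iv(1)[OF g2(1)] g2(2) by metis
  then show "\<tau>1 = \<tau>2" by blast
qed

lemma St_card: "card St \<le> CARD('a) - 1"
proof -
  have "(\<lambda>\<tau>. \<tau> (sg x0)) ` St \<subseteq> UNIV - {x0}"
  proof
    fix y assume "y \<in> (\<lambda>\<tau>. \<tau> (sg x0)) ` St"
    then obtain \<tau> where t: "\<tau> \<in> St" "y = \<tau> (sg x0)" by blast
    obtain g where g: "g \<in> G" "perm_part g = \<tau>" "\<tau> x0 = x0" using t(1) unfolding St_def by blast
    have "y \<noteq> x0"
    proof
      assume "y = x0"
      then have "\<tau> (sg x0) = \<tau> x0" using t g by simp
      then have "sg x0 = x0" using pp_inj[OF g(1)] g(2) by (metis injD)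
      then show False using sg_nofix by blast
    qed
    then show "y \<in> UNIV - {x0}" by simp
  qed
  then have "card ((\<lambda>\<tau>. \<tau> (sg x0)) ` St) \<le> card (UNIV - {x0})" by (rule card_mono[rotated]) simp
  then show ?thesis using card_image[OF St_inj] by simp
qed

definition BB where "BB = (\<lambda>\<tau>. rep \<tau> *v v) ` St"

lemma BB_card: "card BB \<le> CARD('a) - 1" "finite BB"
  unfolding BB_def using St_card St_fin card_image_le[OF St_fin, of "\<lambda>\<tau>. rep \<tau> *v v"] by auto

lemma orbit_in: "g \<in> G \<Longrightarrow> g *v v \<in> vec.span BB"
proof -
  assume gG: "g \<in> G"
  obtain n where n: "n \<in> N" "perm_part n x0 = perm_part (iv g) x0" using Ntrans by blast
  have nG: "n \<in> G" using n NinG by blast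
  define g0 where "g0 = n ** g"
  have g0G: "g0 \<in> G" unfolding g0_def using nG gG mult_in by blast
  have "perm_part g0 x0 = x0" unfolding g0_def using pp_mult[OF nG gG] n(2) pp_iv(1)[OF gG] by simp
  then have tS: "perm_part g0 \<in> St" unfolding St_def using g0G by blast
  define r where "r = rep (perm_part g0)"
  have r: "r \<in> G" "perm_part r = perm_part g0" using rep[OF tS] r_def by auto
  define z where "z = g0 ** iv r"
  have zG: "z \<in> G" unfolding z_def using g0G r by (simp add: mult_in iv_in)
  have "perm_part z = perm_part (iv r) \<circ> perm_part r" unfolding z_def using pp_mult[OF g0G iv_in[OF r(1)]] r by simp
  then have "perm_part z = id" using pp_iv(2)[OF r(1)] by auto
  then have "diagonal_mat z" using diagonal_iff monoG[OF zG] by metis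
  then obtain c where c: "z = mat c" using H0 zG by blast
  have zr: "z ** r = g0" unfolding z_def using iv_l[OF r(1)] by (simp add: matrix_mul_assoc[symmetric])
  have gg: "iv n ** g0 = g" unfolding g0_def using iv_l[OF nG] by (simp add: matrix_mul_assoc)
  define n'' where "n'' = iv r ** iv n ** r"
  have n''N: "n'' \<in> N" unfolding n''_def using Nnorm[OF iv_in[OF r(1)] Niv[OF n(1)]] iv_iv[OF r(1)] by simp
  obtain c' where c': "n'' *v v = c' *s v" using N_eig[OF n''N] by blast
  have "r ** n'' = iv n ** r" unfolding n''_def using iv_r[OF r(1)] by (simp add: matrix_mul_assoc)
  then have e2: "iv n *v (r *v v) = c' *s (r *v v)"
    by (metis c' matrix_vector_mul_assoc vector_scalar_commute)
  have "g *v v = iv n *v (z *v (r *v v))" using gg zr by (simp add: matrix_vector_mul_assoc)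
  also have "\<dots> = (c * c') *s (r *v v)" using c e2 by (simp add: mat_scalar_vec vector_scalar_commute)
  finally have "g *v v = (c * c') *s (r *v v)" .
  moreover have "r *v v \<in> BB" unfolding BB_def r_def using tS by blast
  ultimately show ?thesis by (metis vec.span_base vec.span_scale)
qed

lemma contradiction: False
proof -
  define W where "W = vec.span ((\<lambda>g. g *v v) ` G)"
  have sub: "vec.subspace W" unfolding W_def by simp
  have cs: "csubspace_vec W" using sub unfolding vec.subspace_def csubspace_vec_def .
  have vW: "v \<in> W" unfolding W_def using one_in by (metis image_eqI matrix_vector_mul_lid vec.span_base)
  have nz: "W \<noteq> {0}" using vW v_nz by blast
  have inv: "g *v w \<in> W" if g: "g \<in> G" and w: "w \<in> W" for g w
  proof -
    have "w \<in> vec.span ((\<lambda>g. g *v v) ` G)" using w W_def by simp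
    then show ?thesis
    proof (induction rule: vec.span_induct)
      case base
      show ?case unfolding vec.subspace_def
        using sub unfolding vec.subspace_def
        by (simp add: matrix_vector_right_distrib vector_scalar_commute)
    next
      case (step x)
      then obtain g' where g': "g' \<in> G" "x = g' *v v" by blast
      have "g *v x = (g ** g') *v v" using g' by (simp add: matrix_vector_mul_assoc)
      then show ?case unfolding W_def using mult_in[OF g g'(1)] by (metis image_eqI vec.span_base)
    qed
  qed
  have "W \<subseteq> vec.span BB" unfolding W_def
    using orbit_in vec.span_mono[of "(\<lambda>g. g *v v) ` G" "vec.span BB"] vec.span_span by blast
  then have "vec.dim W \<le> card BB" using vec.dim_le_card BB_card(2) by blast
  then have dW: "vec.dim W \<le> CARD('a) - 1" using BB_card(1) by simp
  have "W \<noteq> UNIV"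
  proof
    assume "W = UNIV"
    then have "vec.dim W = CARD('a)" using vec_dim_card by simp
    then show False using dW card_ge2 by simp
  qed
  then show False using irr cs nz inv unfolding irreducible_mat_group_def by blast
qed

end


theorem theorem2p12:
  fixes G :: "(complex^'n::finite^'n) set"
  assumes "prime CARD('n)"
    and "finite G"
    and "group (mat_group G)"
    and "\<forall>A\<in>G. monomial_mat A"
    and "\<forall>i j. \<exists>g\<in>G. perm_part g i = j"
  shows "((\<exists>g\<in>G. diagonal_mat g \<and> \<not> (\<exists>c. g = mat c)) \<longrightarrow> irreducible_mat_group G)
       \<and> ((solvable (mat_group G) \<and> irreducible_mat_group G)
            \<longrightarrow> (\<exists>g\<in>G. diagonal_mat g \<and> \<not> (\<exists>c. g = mat c)))"
proof -
  interpret M: mgrp_tr G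
    unfolding mgrp_tr_def mgrp_def mgrp_tr_axioms_def using assms by auto
  have part1: "(\<exists>g\<in>G. diagonal_mat g \<and> \<not> (\<exists>c. g = mat c)) \<longrightarrow> irreducible_mat_group G"
    using M.part1[OF assms(1)] by blast
  have part2: "(solvable (mat_group G) \<and> irreducible_mat_group G)
            \<longrightarrow> (\<exists>g\<in>G. diagonal_mat g \<and> \<not> (\<exists>c. g = mat c))"
  proof (intro impI, elim conjE)
    assume solv: "solvable (mat_group G)" and irr: "irreducible_mat_group G"
    show "\<exists>g\<in>G. diagonal_mat g \<and> \<not> (\<exists>c. g = mat c)"
    proof (rule ccontr)
      assume "\<not> (\<exists>g\<in>G. diagonal_mat g \<and> \<not> (\<exists>c. g = mat c))"
      then have H0: "\<forall>g\<in>G. diagonal_mat g \<longrightarrow> (\<exists>c. g = mat c)" by blast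
      have "CARD('n) \<ge> 2" using assms(1) prime_ge_2_nat by blast
      then obtain i j :: 'n where ij: "i \<noteq> j"
        by (metis card_2_iff' card_le_Suc_iff numeral_2_eq_2 insert_iff)
      obtain g where g: "g \<in> G" "perm_part g i = j" using assms(5) by blast
      have "perm_part g \<noteq> id" using g ij by auto
      then have nd: "\<exists>g\<in>G. \<not> diagonal_mat g" using g diagonal_iff by blast
      obtain N where N: "N \<subseteq> G" "mat 1 \<in> N" "\<forall>a\<in>N. \<forall>b\<in>N. a ** b \<in> N" "\<forall>a\<in>N. M.iv a \<in> N"
        "\<forall>g\<in>G. \<forall>n\<in>N. g ** n ** M.iv g \<in> N" "\<forall>a\<in>N. \<forall>b\<in>N. perm_part a \<circ> perm_part b = perm_part b \<circ> perm_part a"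
        "\<exists>n\<in>N. \<not> diagonal_mat n"
        using M.exists_N[OF solv nd] by blast
      have "p2 G N"
        unfolding p2_def using assms N H0 irr unfolding M.iv_def by blast
      then show False using p2.contradiction by blast
    qed
  qed
  show ?thesis using part1 part2 by blast
qed

end
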